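(* Let $X$ be a quasi-Banach function space over $\mathbf{R}^d$. Then the following are equivalent: (i) $X\in A$; (ii) $T_Q:X\to X$ is bounded uniformly over all cubes $Q$; (iii) $T_Q:X\to X_{\mathrm{weak}}$ is bounded uniformly over all cubes $Q$. Moreover, in this case \[[X]_A=\sup_Q\|T_Q\|_{X\to X}=\sup_Q\|T_Q\|_{X\to X_{\mathrm{weak}}}.\]
   Context: Cubes are axis-parallel cubes in $\mathbf{R}^d$. A quasi-Banach function space over $\mathbf{R}^d$ is a complete quasi-normed space $X\subseteq L^0(\mathbf{R}^d)$ with the ideal property (if $f\in X$, $|g|\le|f|$ then $g\in X$, $\|g\|_X\le\|f\|_X$) and the saturation property (every set of positive measure contains a subset $F$ of positive measure with $\mathbf{1}_F\in X$). Köthe dual: $\|g\|_{X'}=\sup_{\|f\|_X=1}\int|fg|$. $X_{\mathrm{weak}}$: $f$ with $\mathbf{1}_{\{|f|>\lambda\}}\in X$ for all $\lambda>0$ and $\|f\|_{X_{\mathrm{weak}}}=\sup_\lambda\lambda\|\mathbf{1}_{\{|f|>\lambda\}}\|_X<\infty$. $T_Qf=\big(\frac1{|Q|}\int_Q|f|\big)\mathbf{1}_Q$. $X\in A$: $\mathbf{1}_Q\in X$ and $\mathbf{1}_Q\in X'$ for all cubes and $[X]_A=\sup_Q|Q|^{-1}\|\mathbf{1}_Q\|_X\|\mathbf{1}_Q\|_{X'}<\infty$. *)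

theory Defs
  imports "HOL-Analysis.Analysis"
begin

text \<open>R^d is modelled by an arbitrary Euclidean space 'a. A quasi-Banach function space X is given by its
  quasi-norm N, extended to all measurable functions with value \<infinity> outside X,
  so that X = {f measurable. N f < \<infinity>}.\<close>

definition cubes :: "'a::euclidean_space set set" where
  "cubes = {cbox a (a + l *\<^sub>R One) | a l. l > 0}"

definition qbfs_space :: "(('a::euclidean_space \<Rightarrow> real) \<Rightarrow> ennreal) \<Rightarrow> ('a \<Rightarrow> real) set" where
  "qbfs_space N = {f \<in> borel_measurable lebesgue. N f < \<infinity>}"

definition qBFS :: "(('a::euclidean_space \<Rightarrow> real) \<Rightarrow> ennreal) \<Rightarrow> bool" where
  "qBFS N \<longleftrightarrow>
     \<comment> \<open>definiteness\<close>
     (\<forall>f\<in>borel_measurable lebesgue. N f = 0 \<longleftrightarrow> (AE x in lebesgue. f x = 0)) \<and>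
     \<comment> \<open>homogeneity\<close>
     (\<forall>f\<in>borel_measurable lebesgue. \<forall>c::real. N (\<lambda>x. c * f x) = ennreal \<bar>c\<bar> * N f) \<and>
     \<comment> \<open>quasi-triangle inequality\<close>
     (\<exists>K::real\<ge>1. \<forall>f\<in>borel_measurable lebesgue. \<forall>g\<in>borel_measurable lebesgue.
         N (\<lambda>x. f x + g x) \<le> ennreal K * (N f + N g)) \<and>
     \<comment> \<open>ideal property\<close>
     (\<forall>f\<in>borel_measurable lebesgue. \<forall>g\<in>borel_measurable lebesgue.
         (AE x in lebesgue. \<bar>g x\<bar> \<le> \<bar>f x\<bar>) \<longrightarrow> N g \<le> N f) \<and>
     \<comment> \<open>saturation property\<close>
     (\<forall>E\<in>sets lebesgue. emeasure lebesgue E > 0 \<longrightarrow>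
         (\<exists>F\<in>sets lebesgue. F \<subseteq> E \<and> emeasure lebesgue F > 0 \<and>
            N (indicator F :: 'a \<Rightarrow> real) < \<infinity>)) \<and>
     \<comment> \<open>completeness\<close>
     (\<forall>u::nat \<Rightarrow> 'a \<Rightarrow> real. (\<forall>n. u n \<in> qbfs_space N) \<and>
         (\<forall>e::real>0. \<exists>M. \<forall>m\<ge>M. \<forall>n\<ge>M. N (\<lambda>x. u m x - u n x) < ennreal e) \<longrightarrow>
         (\<exists>f\<in>qbfs_space N. (\<lambda>n. N (\<lambda>x. u n x - f x)) \<longlonglongrightarrow> 0))"

text \<open>Koethe dual norm (ennreal-valued; g \<in> X' iff finite).\<close>
definition kothe_norm :: "(('a::euclidean_space \<Rightarrow> real) \<Rightarrow> ennreal) \<Rightarrow> ('a \<Rightarrow> real) \<Rightarrow> ennreal" where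
  "kothe_norm N g = (SUP f\<in>{f\<in>qbfs_space N. N f = 1}. \<integral>\<^sup>+ x. ennreal \<bar>f x * g x\<bar> \<partial>lebesgue)"

text \<open>Weak quasi-norm (value \<infinity> iff f \<notin> X_weak).\<close>
definition weak_norm :: "(('a::euclidean_space \<Rightarrow> real) \<Rightarrow> ennreal) \<Rightarrow> ('a \<Rightarrow> real) \<Rightarrow> ennreal" where
  "weak_norm N f = (SUP t\<in>{0<..}. ennreal t * N (indicator {x. t < \<bar>f x\<bar>} :: 'a \<Rightarrow> real))"

definition A_const :: "(('a::euclidean_space \<Rightarrow> real) \<Rightarrow> ennreal) \<Rightarrow> ennreal" where
  "A_const N = (SUP Q\<in>cubes. N (indicator Q :: 'a \<Rightarrow> real) * kothe_norm N (indicator Q)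
                              / emeasure lebesgue Q)"

definition in_A :: "(('a::euclidean_space \<Rightarrow> real) \<Rightarrow> ennreal) \<Rightarrow> bool" where
  "in_A N \<longleftrightarrow> (\<forall>Q\<in>cubes. N (indicator Q :: 'a \<Rightarrow> real) < \<infinity> \<and> kothe_norm N (indicator Q) < \<infinity>)
                \<and> A_const N < \<infinity>"

definition avg :: "'a::euclidean_space set \<Rightarrow> ('a \<Rightarrow> real) \<Rightarrow> ennreal" where
  "avg Q f = (\<integral>\<^sup>+ x\<in>Q. ennreal \<bar>f x\<bar> \<partial>lebesgue) / emeasure lebesgue Q"

definition T_op :: "'a::euclidean_space set \<Rightarrow> ('a \<Rightarrow> real) \<Rightarrow> ('a \<Rightarrow> real)" where
  "T_op Q f = (\<lambda>x. enn2real (avg Q f) * indicator Q x)"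

text \<open>Operator (quasi-)norm of T_Q from X (quasi-norm N) into the space with quasi-norm M;
  \<infinity> if T_Q f is undefined (infinite average) for some f in X.\<close>
definition T_opnorm :: "(('a::euclidean_space \<Rightarrow> real) \<Rightarrow> ennreal) \<Rightarrow> (('a \<Rightarrow> real) \<Rightarrow> ennreal)
                          \<Rightarrow> 'a set \<Rightarrow> ennreal" where
  "T_opnorm N M Q = (SUP f\<in>{f\<in>qbfs_space N. N f \<le> 1}.
                       (if avg Q f = \<infinity> then \<infinity> else M (T_op Q f)))"

end

theory Submission
  imports Defs
begin

lemma cube_meas:
  assumes "Q \<in> (cubes :: 'a::euclidean_space set set)"
  shows "Q \<in> sets lebesgue" "0 < emeasure lebesgue Q" "emeasure lebesgue Q < \<infinity>"
proof -
  obtain a l where Q: "Q = cbox a (a + l *\<^sub>R One)" "l > 0" using assms unfolding cubes_def by blast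
  show "Q \<in> sets lebesgue" using Q by simp
  have "emeasure lebesgue Q = emeasure lborel Q" using Q by simp
  also have "\<dots> = (\<Prod>b\<in>(Basis::'a set). l)" using Q
    by (simp add: emeasure_lborel_cbox_eq inner_simps)
  finally have e: "emeasure lebesgue Q = ennreal (l ^ DIM('a))" using Q by simp
  show "0 < emeasure lebesgue Q" "emeasure lebesgue Q < \<infinity>" using e Q by auto
qed

lemma qBFS_def0: assumes "qBFS N" and "f \<in> borel_measurable lebesgue"
  shows "N f = 0 \<longleftrightarrow> (AE x in lebesgue. f x = 0)"
  using assms unfolding qBFS_def by blast

lemma qBFS_hom: assumes "qBFS N" and "f \<in> borel_measurable lebesgue"
  shows "N (\<lambda>x. c * f x) = ennreal \<bar>c\<bar> * N f"
  using assms unfolding qBFS_def by blast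

lemma qBFS_sat: assumes "qBFS N" "E \<in> sets lebesgue" "emeasure lebesgue E > 0"
  shows "\<exists>F\<in>sets lebesgue. F \<subseteq> E \<and> emeasure lebesgue F > 0 \<and> N (indicator F :: _ \<Rightarrow> real) < \<infinity>"
  using assms unfolding qBFS_def by blast

lemma qBFS_zero: assumes "qBFS N" shows "N (\<lambda>x. 0) = 0"
  using qBFS_def0[OF assms, of "\<lambda>x. 0"] by simp

lemma qBFS_ind_pos: assumes "qBFS N" "S \<in> sets lebesgue" "emeasure lebesgue S > 0"
  shows "N (indicator S :: _ \<Rightarrow> real) \<noteq> 0"
proof
  assume "N (indicator S :: _ \<Rightarrow> real) = 0"
  then have "AE x in lebesgue. (indicator S x :: real) = 0"
    using qBFS_def0[OF assms(1), of "indicator S"] assms(2) by simp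
  then have "AE x in lebesgue. x \<notin> S" by (auto elim: AE_mp simp: indicator_def)
  then have "emeasure lebesgue S = 0"
    using AE_iff_measurable[OF assms(2), of "\<lambda>x. x \<notin> S"] by simp
  with assms(3) show False by simp
qed

lemma kothe_le1:
  assumes N: "qBFS N"
  shows "(SUP f\<in>{f\<in>qbfs_space N. N f \<le> 1}. \<integral>\<^sup>+ x. ennreal \<bar>f x * g x\<bar> \<partial>lebesgue) = kothe_norm N g"
proof (rule antisym)
  show "kothe_norm N g \<le> (SUP f\<in>{f\<in>qbfs_space N. N f \<le> 1}. \<integral>\<^sup>+ x. ennreal \<bar>f x * g x\<bar> \<partial>lebesgue)"
    unfolding kothe_norm_def by (rule SUP_subset_mono) auto
  show "(SUP f\<in>{f\<in>qbfs_space N. N f \<le> 1}. \<integral>\<^sup>+ x. ennreal \<bar>f x * g x\<bar> \<partial>lebesgue) \<le> kothe_norm N g"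
  proof (rule SUP_least)
    fix f assume f: "f \<in> {f\<in>qbfs_space N. N f \<le> 1}"
    then have fm: "f \<in> borel_measurable lebesgue" and fN: "N f \<le> 1" and fin: "N f < \<infinity>"
      by (auto simp: qbfs_space_def)
    show "(\<integral>\<^sup>+ x. ennreal \<bar>f x * g x\<bar> \<partial>lebesgue) \<le> kothe_norm N g"
    proof (cases "N f = 0")
      case True
      then have "AE x in lebesgue. f x = 0" using qBFS_def0[OF N fm] by simp
      then have "(\<integral>\<^sup>+ x. ennreal \<bar>f x * g x\<bar> \<partial>lebesgue) = 0"
        by (subst nn_integral_cong_AE[where v="\<lambda>x. 0"]) (auto elim: AE_mp)
      then show ?thesis by simp
    next
      case False
      define r where "r = enn2real (N f)"
      have Nf: "N f = ennreal r" using fin unfolding r_def by (simp add: less_top)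
      have r0: "r > 0" using False Nf by (metis ennreal_0 enn2real_nonneg less_eq_real_def r_def)
      have r1: "r \<le> 1" using fN Nf by (simp add: ennreal_le_1)
      define h where "h = (\<lambda>x. (1/r) * f x)"
      have hm: "h \<in> borel_measurable lebesgue" unfolding h_def using fm by measurable
      have Nh: "N h = 1" unfolding h_def using qBFS_hom[OF N fm, of "1/r"] Nf r0
        by (simp add: ennreal_mult[symmetric])
      have hX: "h \<in> {f\<in>qbfs_space N. N f = 1}" using hm Nh by (simp add: qbfs_space_def)
      have "(\<integral>\<^sup>+ x. ennreal \<bar>f x * g x\<bar> \<partial>lebesgue) \<le> (\<integral>\<^sup>+ x. ennreal \<bar>h x * g x\<bar> \<partial>lebesgue)"
      proof (rule nn_integral_mono)
        fix x
        have "\<bar>f x * g x\<bar> \<le> (1/r) * \<bar>f x * g x\<bar>" using r0 r1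
          by (simp add: field_simps mult_left_le_one_le)
        also have "\<dots> = \<bar>h x * g x\<bar>" unfolding h_def using r0 by (simp add: abs_mult)
        finally show "ennreal \<bar>f x * g x\<bar> \<le> ennreal \<bar>h x * g x\<bar>" by (rule ennreal_leI)
      qed
      also have "\<dots> \<le> kothe_norm N g" unfolding kothe_norm_def
        using hX by (rule SUP_upper)
      finally show ?thesis .
    qed
  qed
qed

lemma kothe_ind_pos:
  assumes N: "qBFS N" and Q: "Q \<in> sets lebesgue" "emeasure lebesgue Q > 0"
  shows "kothe_norm N (indicator Q :: _ \<Rightarrow> real) \<noteq> 0"
proof -
  obtain F where F: "F \<in> sets lebesgue" "F \<subseteq> Q" "emeasure lebesgue F > 0" "N (indicator F :: _ \<Rightarrow> real) < \<infinity>"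
    using qBFS_sat[OF N Q] by blast
  have Fpos: "N (indicator F :: _ \<Rightarrow> real) \<noteq> 0" using qBFS_ind_pos[OF N F(1) F(3)] .
  define r where "r = enn2real (N (indicator F :: _ \<Rightarrow> real))"
  have NF: "N (indicator F :: _ \<Rightarrow> real) = ennreal r" using F(4) unfolding r_def by (simp add: less_top)
  have r0: "r > 0" using Fpos NF by (metis ennreal_0 enn2real_nonneg less_eq_real_def r_def)
  define h where "h = (\<lambda>x. (1/r) * (indicator F x :: real))"
  have Fm: "(indicator F :: _ \<Rightarrow> real) \<in> borel_measurable lebesgue" using F(1) by simp
  have hm: "h \<in> borel_measurable lebesgue" unfolding h_def using Fm by measurable
  have Nh: "N h = 1" unfolding h_def using qBFS_hom[OF N Fm, of "1/r"] NF r0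
    by (simp add: ennreal_mult[symmetric])
  have hX: "h \<in> {f\<in>qbfs_space N. N f = 1}" using hm Nh by (simp add: qbfs_space_def)
  have eq: "(\<lambda>x. ennreal \<bar>h x * indicator Q x\<bar>) = (\<lambda>x. ennreal (1/r) * indicator F x)"
    using F(2) r0 by (auto simp: h_def indicator_def fun_eq_iff)
  have "(\<integral>\<^sup>+ x. ennreal \<bar>h x * indicator Q x\<bar> \<partial>lebesgue) = ennreal (1/r) * emeasure lebesgue F"
    unfolding eq using F(1) by (simp add: nn_integral_cmult_indicator)
  moreover have "ennreal (1/r) * emeasure lebesgue F > 0" using r0 F(3)
    by (simp add: ennreal_zero_less_mult_iff)
  moreover have "(\<integral>\<^sup>+ x. ennreal \<bar>h x * indicator Q x\<bar> \<partial>lebesgue) \<le> kothe_norm N (indicator Q)"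
    unfolding kothe_norm_def using hX by (rule SUP_upper)
  ultimately show ?thesis by auto
qed

lemma sup_open_ennreal: assumes "(c::real) > 0" shows "(SUP t\<in>{0<..<c}. ennreal t) = ennreal c"
proof (rule antisym)
  show "(SUP t\<in>{0<..<c}. ennreal t) \<le> ennreal c" by (rule SUP_least) (auto intro: ennreal_leI)
  show "ennreal c \<le> (SUP t\<in>{0<..<c}. ennreal t)"
  proof (subst le_SUP_iff, intro allI impI)
    fix y assume y: "y < ennreal c"
    obtain z where z: "y < z" "z < ennreal c" using dense[OF y] by blast
    have "z < top" using z(2) ennreal_less_top less_trans by blast
    then have zt: "z = ennreal (enn2real z)" by (simp add: less_top[symmetric] ennreal_enn2real_if)
    have "enn2real z < c" using z zt assms by (metis ennreal_less_iff enn2real_nonneg)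
    moreover have "enn2real z > 0" using z zt
      by (metis enn2real_nonneg ennreal_0 ennreal_less_zero_iff leD less_eq_real_def not_less_zero)
    moreover have "y < ennreal (enn2real z)" using z(1) zt by metis
    ultimately show "\<exists>i\<in>{0<..<c}. y < ennreal i" by auto
  qed
qed

lemma weak_cind:
  assumes N: "qBFS N" and c: "c \<ge> 0"
  shows "weak_norm N (\<lambda>x. c * indicator Q x) = ennreal c * N (indicator Q)"
proof -
  have set: "{x. t < \<bar>c * indicator Q x\<bar>} = (if t < c then Q else {})" if "t > 0" for t :: real
    using that c by (auto simp: indicator_def)
  have ind0: "N (indicator {} :: _ \<Rightarrow> real) = 0" using qBFS_zero[OF N] by (simp add: indicator_def[abs_def])
  have w: "weak_norm N (\<lambda>x. c * indicator Q x) =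
      (SUP t\<in>{0<..}. (if t < c then ennreal t * N (indicator Q) else 0))"
    unfolding weak_norm_def by (rule SUP_cong) (auto simp: set ind0)
  show ?thesis
  proof (cases "c = 0")
    case True then show ?thesis unfolding w by simp
  next
    case False
    then have c0: "c > 0" using c by simp
    show ?thesis unfolding w
    proof (rule antisym)
      show "(SUP t\<in>{0<..}. (if t < c then ennreal t * N (indicator Q) else 0)) \<le> ennreal c * N (indicator Q)"
        by (rule SUP_least) (auto intro!: mult_right_mono ennreal_leI)
      have "ennreal c * N (indicator Q) = (SUP t\<in>{0<..<c}. ennreal t * N (indicator Q))"
        using sup_open_ennreal[OF c0] SUP_mult_right_ennreal by metis
      also have "\<dots> \<le> (SUP t\<in>{0<..}. (if t < c then ennreal t * N (indicator Q) else 0))"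
        by (rule SUP_mono) (auto intro!: bexI)
      finally show "ennreal c * N (indicator Q) \<le> (SUP t\<in>{0<..}. (if t < c then ennreal t * N (indicator Q) else 0))" .
    qed
  qed
qed

lemma opnorm_formula:
  assumes N: "qBFS N" and Q: "Q \<in> cubes"
    and M: "\<And>c. c \<ge> 0 \<Longrightarrow> M (\<lambda>x. c * indicator Q x) = ennreal c * N (indicator Q)"
  shows "T_opnorm N M Q = kothe_norm N (indicator Q) / emeasure lebesgue Q * N (indicator Q)"
proof -
  note Qm = cube_meas[OF Q]
  have Npos: "N (indicator Q :: _ \<Rightarrow> real) \<noteq> 0" using qBFS_ind_pos[OF N Qm(1,2)] .
  have tm: "(if avg Q f = \<infinity> then \<infinity> else M (T_op Q f)) = avg Q f * N (indicator Q)" for f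
  proof (cases "avg Q f = \<infinity>")
    case True then show ?thesis using Npos by simp
  next
    case False
    then have "M (T_op Q f) = ennreal (enn2real (avg Q f)) * N (indicator Q)"
      unfolding T_op_def by (intro M) simp
    then show ?thesis using False by (simp add: ennreal_enn2real_if)
  qed
  have avg: "avg Q f = (\<integral>\<^sup>+ x. ennreal \<bar>f x * indicator Q x\<bar> \<partial>lebesgue) / emeasure lebesgue Q" for f :: "_ \<Rightarrow> real"
    unfolding avg_def
    by (intro arg_cong2[where f="(/)"] nn_integral_cong refl) (auto simp: indicator_def)
  have "T_opnorm N M Q = (SUP f\<in>{f\<in>qbfs_space N. N f \<le> 1}. avg Q f * N (indicator Q))"
    unfolding T_opnorm_def by (rule SUP_cong[OF refl]) (rule tm)
  also have "\<dots> = (SUP f\<in>{f\<in>qbfs_space N. N f \<le> 1}. avg Q f) * N (indicator Q)"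
    by (simp add: SUP_mult_right_ennreal)
  also have "(SUP f\<in>{f\<in>qbfs_space N. N f \<le> 1}. avg Q f) =
     (SUP f\<in>{f\<in>qbfs_space N. N f \<le> 1}. \<integral>\<^sup>+ x. ennreal \<bar>f x * indicator Q x\<bar> \<partial>lebesgue) / emeasure lebesgue Q"
    by (simp add: avg SUP_divide_ennreal)
  also have "\<dots> = kothe_norm N (indicator Q) / emeasure lebesgue Q"
    by (simp add: kothe_le1[OF N])
  finally show ?thesis .
qed

lemma opnorm_eq_A:
  assumes N: "qBFS N" and Q: "Q \<in> cubes"
  shows "T_opnorm N N Q = N (indicator Q) * kothe_norm N (indicator Q) / emeasure lebesgue Q"
    and "T_opnorm N (weak_norm N) Q = N (indicator Q) * kothe_norm N (indicator Q) / emeasure lebesgue Q"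
proof -
  note Qm = cube_meas[OF Q]
  have Im: "(indicator Q :: _ \<Rightarrow> real) \<in> borel_measurable lebesgue" using Qm(1) by simp
  have eq: "kothe_norm N (indicator Q) / emeasure lebesgue Q * N (indicator Q) =
      N (indicator Q) * kothe_norm N (indicator Q) / emeasure lebesgue Q"
    by (simp add: divide_ennreal_def mult_ac)
  show "T_opnorm N N Q = N (indicator Q) * kothe_norm N (indicator Q) / emeasure lebesgue Q"
    using opnorm_formula[OF N Q, of N] qBFS_hom[OF N Im] eq by simp
  show "T_opnorm N (weak_norm N) Q = N (indicator Q) * kothe_norm N (indicator Q) / emeasure lebesgue Q"
    using opnorm_formula[OF N Q, of "weak_norm N"] weak_cind[OF N] eq by simp
qed

lemma A_fin:
  assumes N: "qBFS N" and Q: "Q \<in> cubes"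
    and lt: "N (indicator Q) * kothe_norm N (indicator Q) / emeasure lebesgue Q < \<infinity>"
  shows "N (indicator Q :: _ \<Rightarrow> real) < \<infinity>" "kothe_norm N (indicator Q :: _ \<Rightarrow> real) < \<infinity>"
proof -
  note Qm = cube_meas[OF Q]
  have Npos: "N (indicator Q :: _ \<Rightarrow> real) \<noteq> 0" using qBFS_ind_pos[OF N Qm(1,2)] .
  have Kpos: "kothe_norm N (indicator Q :: _ \<Rightarrow> real) \<noteq> 0" using kothe_ind_pos[OF N Qm(1,2)] .
  have ip: "inverse (emeasure lebesgue Q) \<noteq> 0" using Qm(3) by simp
  have "N (indicator Q) * kothe_norm N (indicator Q) * inverse (emeasure lebesgue Q) < \<infinity>"
    using lt by (simp add: divide_ennreal_def)
  then show "N (indicator Q :: _ \<Rightarrow> real) < \<infinity>" "kothe_norm N (indicator Q :: _ \<Rightarrow> real) < \<infinity>"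
    using Npos Kpos ip by (auto simp: ennreal_mult_less_top)
qed

theorem proposition3p3:
  fixes N :: "('a::euclidean_space \<Rightarrow> real) \<Rightarrow> ennreal"
  assumes "qBFS N"
  shows "(in_A N \<longleftrightarrow> (SUP Q\<in>cubes. T_opnorm N N Q) < \<infinity>)
       \<and> (in_A N \<longleftrightarrow> (SUP Q\<in>cubes. T_opnorm N (weak_norm N) Q) < \<infinity>)
       \<and> (in_A N \<longrightarrow> A_const N = (SUP Q\<in>cubes. T_opnorm N N Q)
                  \<and> A_const N = (SUP Q\<in>cubes. T_opnorm N (weak_norm N) Q))"
proof -
  have e1: "(SUP Q\<in>cubes. T_opnorm N N Q) = A_const N"
    unfolding A_const_def by (rule SUP_cong[OF refl]) (rule opnorm_eq_A(1)[OF assms])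
  have e2: "(SUP Q\<in>cubes. T_opnorm N (weak_norm N) Q) = A_const N"
    unfolding A_const_def by (rule SUP_cong[OF refl]) (rule opnorm_eq_A(2)[OF assms])
  have iA: "in_A N \<longleftrightarrow> A_const N < \<infinity>"
  proof
    assume "A_const N < \<infinity>"
    moreover have "N (indicator Q :: 'a \<Rightarrow> real) * kothe_norm N (indicator Q) / emeasure lebesgue Q \<le> A_const N"
      if "Q \<in> cubes" for Q
      unfolding A_const_def using that by (rule SUP_upper)
    ultimately show "in_A N" unfolding in_A_def
      using A_fin[OF assms] by (meson le_less_trans)
  qed (simp add: in_A_def)
  show ?thesis using e1 e2 iA by simp
qed

end
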